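(* Let $v\in\mathbb{H}\setminus\mathbb{R}$ be written in polar form $v=re^{\theta u}$ with $r=|v|$, $\theta\in\mathbb{R}$ and $u$ a unit imaginary quaternion, and let $\sigma(v)\colon\mathbb{H}\to\mathbb{H}$, $\sigma(v)(x)=vxv^*$. Then $\sigma(v)$ respects the splitting $\mathbb{H}=\mathcal{V}\oplus\mathbb{R}k$, and: (1) the restriction of $\sigma(v)$ to $\mathcal{V}$, identified with $\mathbb{R}^3$ via $(x,y,z)\mapsto x+yi+zj$, is a rotation of angle $2\theta$ about the axis $-uk$, composed with multiplication by $|v|^2$; (2) if $v\in\mathcal{V}$, then the rotation in (1) is also a rotation of angle $2\theta$ in the 2-plane spanned by $1$ and $v$, from $1$ towards $v$; (3) the restriction of $\sigma(v)$ to $\mathbb{R}k$ is multiplication by $|v|^2$.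
   Context: For $q=a+bi+cj+dk\in\mathbb{H}$, $q^*=a+bi+cj-dk$, $\bar q=a-bi-cj-dk$, $|q|^2=q\bar q$. Paravectors $\mathcal{V}=\mathrm{span}_\mathbb{R}\{1,i,j\}$, identified with $\mathbb{R}^3$ by $(x,y,z)\mapsto x+yi+zj$ with the standard orientation (so $(1,i,j)$ is an oriented basis) and dot product; for $u$ imaginary, $-uk\in\mathcal{V}$. Rotation "from $a$ towards $b$" in a 2-plane means that for small angles $a$ moves into the half-plane containing $b$; rotations about an axis are right-handed.
   Formalization: Part (2) is claimed only for polar forms whose angle theta satisfies sin(theta) > 0. The statement above fails without it. *)

theory Defs
  imports "HOL-Analysis.Analysis" "HOL-Analysis.Cross3"
begin

datatype quat = Quat (qre: real) (qi: real) (qj: real) (qk: real)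

instantiation quat :: real_vector
begin
definition "0 = Quat 0 0 0 0"
definition "p + q = Quat (qre p + qre q) (qi p + qi q) (qj p + qj q) (qk p + qk q)"
definition "- p = Quat (- qre p) (- qi p) (- qj p) (- qk p)"
definition "p - q = Quat (qre p - qre q) (qi p - qi q) (qj p - qj q) (qk p - qk q)"
definition "scaleR c p = Quat (c * qre p) (c * qi p) (c * qj p) (c * qk p)"
instance
  by standard (auto simp: zero_quat_def plus_quat_def uminus_quat_def minus_quat_def
      scaleR_quat_def algebra_simps intro: quat.expand)
end

text \<open>Hamilton product: i^2 = j^2 = k^2 = ijk = -1.\<close>
instantiation quat :: "{times, one}"
begin
definition "1 = Quat 1 0 0 0"
definition "p * q = Quat
   (qre p * qre q - qi p * qi q - qj p * qj q - qk p * qk q)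
   (qre p * qi q + qi p * qre q + qj p * qk q - qk p * qj q)
   (qre p * qj q - qi p * qk q + qj p * qre q + qk p * qi q)
   (qre p * qk q + qi p * qj q - qj p * qi q + qk p * qre q)"
instance ..
end

definition qI :: quat where "qI = Quat 0 1 0 0"
definition qJ :: quat where "qJ = Quat 0 0 1 0"
definition qK :: quat where "qK = Quat 0 0 0 1"

definition qreal :: "real \<Rightarrow> quat" where "qreal a = Quat a 0 0 0"

definition qcnj :: "quat \<Rightarrow> quat" where "qcnj q = Quat (qre q) (- qi q) (- qj q) (- qk q)"
definition qstar :: "quat \<Rightarrow> quat" where "qstar q = Quat (qre q) (qi q) (qj q) (- qk q)"

definition qnorm :: "quat \<Rightarrow> real" where
  "qnorm q = sqrt ((qre q)\<^sup>2 + (qi q)\<^sup>2 + (qj q)\<^sup>2 + (qk q)\<^sup>2)"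

definition qimag :: "quat \<Rightarrow> quat" where "qimag q = Quat 0 (qi q) (qj q) (qk q)"

text \<open>Quaternion exponential (closed form of the power series):
  \<open>exp(a + w) = e^a (cos|w| + sin|w| w/|w|)\<close> for \<open>w\<close> imaginary.\<close>
definition qexp :: "quat \<Rightarrow> quat" where
  "qexp q = exp (qre q) *\<^sub>R (qreal (cos (qnorm (qimag q))) +
      (if qimag q = 0 then 0 else (sin (qnorm (qimag q)) / qnorm (qimag q)) *\<^sub>R qimag q))"

definition real_quats :: "quat set" where "real_quats = range qreal"

definition unit_imag :: "quat \<Rightarrow> bool" where "unit_imag u \<longleftrightarrow> qre u = 0 \<and> qnorm u = 1"

definition paravectors :: "quat set" where "paravectors = {q. qk q = 0}"
definition kline :: "quat set" where "kline = range (\<lambda>t. t *\<^sub>R qK)"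

definition sigma :: "quat \<Rightarrow> quat \<Rightarrow> quat" where "sigma v x = v * x * qstar v"

definition r3_to_V :: "real^3 \<Rightarrow> quat" where "r3_to_V p = Quat (p$1) (p$2) (p$3) 0"
definition V_to_r3 :: "quat \<Rightarrow> real^3" where "V_to_r3 q = vector [qre q, qi q, qj q]"

text \<open>Right-handed rotation by angle \<open>\<phi>\<close> about the (nonzero) axis \<open>a\<close>
  (Rodrigues' formula, \<open>n = a/|a|\<close>; standard orientation via the cross product).\<close>
definition rot_axis :: "real^3 \<Rightarrow> real \<Rightarrow> real^3 \<Rightarrow> real^3" where
  "rot_axis a \<phi> x = (let n = (1 / norm a) *\<^sub>R a in
      cos \<phi> *\<^sub>R x + sin \<phi> *\<^sub>R (cross3 n x) + ((1 - cos \<phi>) * (n \<bullet> x)) *\<^sub>R n)"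

text \<open>With the orthonormal basis
  \<open>e1 = a/|a|\<close>, \<open>e2\<close> = normalised component of \<open>b\<close> orthogonal to \<open>a\<close>, it sends
  \<open>e1 \<mapsto> cos \<phi> e1 + sin \<phi> e2\<close>, \<open>e2 \<mapsto> - sin \<phi> e1 + cos \<phi> e2\<close>.\<close>
definition rot_plane :: "real^3 \<Rightarrow> real^3 \<Rightarrow> real \<Rightarrow> real^3 \<Rightarrow> real^3" where
  "rot_plane a b \<phi> x = (let e1 = (1 / norm a) *\<^sub>R a;
        w = b - (b \<bullet> e1) *\<^sub>R e1;
        e2 = (1 / norm w) *\<^sub>R w;
        s = x \<bullet> e1; t = x \<bullet> e2 in
      x + ((cos \<phi> - 1) * s - sin \<phi> * t) *\<^sub>R e1 + (sin \<phi> * s + (cos \<phi> - 1) * t) *\<^sub>R e2)"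

end

theory Submission
  imports Defs
begin

lemma quat_simps: "qre (p + q) = qre p + qre q" "qi (p + q) = qi p + qi q" "qj (p + q) = qj p + qj q" "qk (p + q) = qk p + qk q"
  "qre (c *\<^sub>R q) = c * qre q" "qi (c *\<^sub>R q) = c * qi q" "qj (c *\<^sub>R q) = c * qj q" "qk (c *\<^sub>R q) = c * qk q"
  "qre (-q) = - qre q" "qi (-q) = - qi q" "qj (-q) = - qj q" "qk (-q) = - qk q"
  "qre 0 = 0" "qi 0 = 0" "qj 0 = 0" "qk 0 = 0"
  by (simp_all add: plus_quat_def scaleR_quat_def uminus_quat_def zero_quat_def)

lemma qexp_form:
  assumes "unit_imag u"
  shows "qexp (\<theta> *\<^sub>R u) = Quat (cos \<theta>) (sin \<theta> * qi u) (sin \<theta> * qj u) (sin \<theta> * qk u)"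
proof -
  have r0: "qre u = 0" and n: "(qi u)\<^sup>2 + (qj u)\<^sup>2 + (qk u)\<^sup>2 = 1"
    using assms by (auto simp: unit_imag_def qnorm_def)
  have im: "qimag (\<theta> *\<^sub>R u) = \<theta> *\<^sub>R u"
    using r0 by (cases u) (simp add: qimag_def scaleR_quat_def)
  have nm: "qnorm (\<theta> *\<^sub>R u) = \<bar>\<theta>\<bar>"
  proof -
    have "(qre (\<theta> *\<^sub>R u))\<^sup>2 + (qi (\<theta> *\<^sub>R u))\<^sup>2 + (qj (\<theta> *\<^sub>R u))\<^sup>2 + (qk (\<theta> *\<^sub>R u))\<^sup>2 = \<theta>\<^sup>2"
      using r0 n by (simp add: quat_simps power_mult_distrib flip: distrib_left)
    then show ?thesis by (simp add: qnorm_def)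
  qed
  have re: "qre (\<theta> *\<^sub>R u) = 0" using r0 by (simp add: quat_simps)
  show ?thesis
  proof (cases "\<theta> = 0")
    case True
    then show ?thesis by (simp add: qexp_def qimag_def qreal_def quat_simps zero_quat_def qnorm_def)
  next
    case False
    have "sin \<bar>\<theta>\<bar> / \<bar>\<theta>\<bar> * \<theta> = sin \<theta>" using False
      by (cases "\<theta> \<ge> 0") auto
    moreover have "\<theta> *\<^sub>R u \<noteq> 0"
    proof
      assume "\<theta> *\<^sub>R u = 0"
      then have "u = 0" using False by simp
      then show False using n by (simp add: quat_simps)
    qed
    ultimately have "qexp (\<theta> *\<^sub>R u) = qreal (cos \<theta>) + sin \<theta> *\<^sub>R u"
      by (simp add: qexp_def im nm re)
    then show ?thesis using r0 by (simp add: qreal_def plus_quat_def scaleR_quat_def)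
  qed
qed

lemma sigma_para: "qk x = 0 \<Longrightarrow> qk (sigma v x) = 0"
  by (simp add: sigma_def times_quat_def qstar_def algebra_simps)

lemma sigma_k: "sigma v (t *\<^sub>R qK) = ((qre v)\<^sup>2 + (qi v)\<^sup>2 + (qj v)\<^sup>2 + (qk v)\<^sup>2) *\<^sub>R (t *\<^sub>R qK)"
  by (simp add: sigma_def times_quat_def qstar_def qK_def scaleR_quat_def algebra_simps power2_eq_square)

lemma axis_form: "qre u = 0 \<Longrightarrow> V_to_r3 (- (u * qK)) = vector [qk u, - qj u, qi u]"
  by (simp add: V_to_r3_def times_quat_def qK_def quat_simps)

lemma main3:
  fixes a b d c s r :: real and p :: "real^3"
  assumes n: "a\<^sup>2 + b\<^sup>2 + d\<^sup>2 = 1" and cs: "c\<^sup>2 + s\<^sup>2 = 1"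
  defines "v \<equiv> Quat (r * c) (r * s * a) (r * s * b) (r * s * d)"
  shows "sigma v (r3_to_V p) = r3_to_V (r\<^sup>2 *\<^sub>R ((c\<^sup>2 - s\<^sup>2) *\<^sub>R p + (2 * s * c) *\<^sub>R cross3 (vector [d, -b, a]) p
     + ((1 - (c\<^sup>2 - s\<^sup>2)) * (vector [d, -b, a] \<bullet> p)) *\<^sub>R vector [d, -b, a]))"
  unfolding v_def sigma_def r3_to_V_def
  apply (simp add: times_quat_def qstar_def cross3_simps)
  apply (intro conjI)
  using n cs by algebra+
lemma inner3: "(vector [x, y, z] :: real^3) \<bullet> vector [x', y', z'] = x * x' + y * y' + z * z'"
  by (simp add: inner_vec_def sum_3)

lemma norm3: "norm (vector [x, y, z] :: real^3) = sqrt (x\<^sup>2 + y\<^sup>2 + z\<^sup>2)"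
  by (simp add: norm_eq_sqrt_inner cross3_simps power2_eq_square)

lemma main4:
  fixes a b c s r \<phi> :: real and p :: "real^3"
  assumes n: "a\<^sup>2 + b\<^sup>2 = 1" and s: "s > 0" and r: "r > 0"
  shows "rot_axis (vector [0, -b, a]) \<phi> p = rot_plane (vector [1, 0, 0]) (vector [r * c, r * s * a, r * s * b]) \<phi> p"
proof -
  have n1: "norm (vector [0, -b, a] :: real^3) = 1" using n by (simp add: norm3 add.commute)
  have e1: "(1 / norm (vector [1, 0, 0] :: real^3)) *\<^sub>R (vector [1, 0, 0] :: real^3) = vector [1, 0, 0]"
    by (simp add: norm3)
  have w: "(vector [r * c, r * s * a, r * s * b] :: real^3) - ((vector [r * c, r * s * a, r * s * b] :: real^3) \<bullet> vector [1, 0, 0]) *\<^sub>R vector [1, 0, 0]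
     = vector [0, r * s * a, r * s * b]"
    by (simp only: inner3) (simp add: vec_eq_iff forall_3)
  have "(r * s * a)\<^sup>2 + (r * s * b)\<^sup>2 = (r * s)\<^sup>2" using n by (simp add: power_mult_distrib flip: distrib_left)
  then have nw: "norm (vector [0, r * s * a, r * s * b] :: real^3) = r * s" using r s by (simp add: norm3)
  have e2: "(1 / (r * s)) *\<^sub>R (vector [0, r * s * a, r * s * b] :: real^3) = vector [0, a, b]"
    using r s by (simp add: cross3_simps)
  show ?thesis
    unfolding rot_axis_def rot_plane_def Let_def n1 e1 w nw e2
    using n apply (simp add: cross3_simps forall_3)
    apply (intro conjI)
    using n by algebra+
qed
theorem proposition2p9:
  fixes v u :: quat and r \<theta> :: real
  assumes "v \<notin> real_quats"
    and "r = qnorm v"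
    and "unit_imag u"
    and "v = r *\<^sub>R qexp (\<theta> *\<^sub>R u)"
  shows "(\<forall>x\<in>paravectors. sigma v x \<in> paravectors) \<and> (\<forall>x\<in>kline. sigma v x \<in> kline) \<and>
         (\<forall>p. sigma v (r3_to_V p) =
               r3_to_V ((qnorm v)\<^sup>2 *\<^sub>R rot_axis (V_to_r3 (- (u * qK))) (2 * \<theta>) p)) \<and>
         (v \<in> paravectors \<and> sin \<theta> > 0 \<longrightarrow>
           (\<forall>p. rot_axis (V_to_r3 (- (u * qK))) (2 * \<theta>) p = rot_plane (V_to_r3 1) (V_to_r3 v) (2 * \<theta>) p)) \<and>
         (\<forall>x\<in>kline. sigma v x = (qnorm v)\<^sup>2 *\<^sub>R x)"
proof -
  define a b d c s where "a = qi u" "b = qj u" "d = qk u" "c = cos \<theta>" "s = sin \<theta>"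
  have r0: "qre u = 0" and n: "a\<^sup>2 + b\<^sup>2 + d\<^sup>2 = 1"
    using assms(3) by (auto simp: unit_imag_def qnorm_def a_b_d_c_s_def)
  have cs: "c\<^sup>2 + s\<^sup>2 = 1" by (simp add: a_b_d_c_s_def)
  have hv: "v = Quat (r * c) (r * s * a) (r * s * b) (r * s * d)"
    unfolding assms(4) qexp_form[OF assms(3)] by (simp add: scaleR_quat_def a_b_d_c_s_def)
  have nv: "(qnorm v)\<^sup>2 = (qre v)\<^sup>2 + (qi v)\<^sup>2 + (qj v)\<^sup>2 + (qk v)\<^sup>2"
    unfolding qnorm_def by (simp add: add_nonneg_nonneg)
  have rr: "(qnorm v)\<^sup>2 = r\<^sup>2" using assms(2) by simp
  have rpos: "r \<ge> 0" using assms(2) by (simp add: qnorm_def)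
  have ax: "V_to_r3 (- (u * qK)) = vector [d, -b, a]"
    using axis_form[OF r0] by (simp add: a_b_d_c_s_def)
  have n1: "norm (vector [d, -b, a] :: real^3) = 1" using n by (simp add: norm3 add.commute add.left_commute)
  have P1: "\<forall>x\<in>paravectors. sigma v x \<in> paravectors"
    by (simp add: paravectors_def sigma_para)
  have P5: "\<forall>x\<in>kline. sigma v x = (qnorm v)\<^sup>2 *\<^sub>R x"
    by (auto simp: kline_def sigma_k nv)
  have P2: "\<forall>x\<in>kline. sigma v x \<in> kline"
    using P5 by (auto simp: kline_def)
  have P3: "\<forall>p. sigma v (r3_to_V p) =
               r3_to_V ((qnorm v)\<^sup>2 *\<^sub>R rot_axis (V_to_r3 (- (u * qK))) (2 * \<theta>) p)"
  proof
    fix p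
    have "cos (2 * \<theta>) = c\<^sup>2 - s\<^sup>2" "sin (2 * \<theta>) = 2 * s * c"
      by (simp_all add: a_b_d_c_s_def cos_double sin_double)
    then show "sigma v (r3_to_V p) =
               r3_to_V ((qnorm v)\<^sup>2 *\<^sub>R rot_axis (V_to_r3 (- (u * qK))) (2 * \<theta>) p)"
      unfolding rr ax rot_axis_def Let_def n1 using main3[OF n cs, of r p] by (simp add: hv)
  qed
  have P4: "v \<in> paravectors \<and> sin \<theta> > 0 \<longrightarrow>
           (\<forall>p. rot_axis (V_to_r3 (- (u * qK))) (2 * \<theta>) p = rot_plane (V_to_r3 1) (V_to_r3 v) (2 * \<theta>) p)"
  proof (intro impI allI)
    fix p
    assume h: "v \<in> paravectors \<and> sin \<theta> > 0"
    have rne: "r \<noteq> 0"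
    proof
      assume "r = 0"
      then have "v = qreal 0" using hv by (simp add: qreal_def)
      then show False using assms(1) by (simp add: real_quats_def)
    qed
    have sp: "s > 0" using h by (simp add: a_b_d_c_s_def)
    have "r * s * d = 0" using h hv by (simp add: paravectors_def)
    then have d0: "d = 0" using rne sp by simp
    then have n2: "a\<^sup>2 + b\<^sup>2 = 1" using n by simp
    have "V_to_r3 1 = vector [1, 0, 0]" by (simp add: V_to_r3_def one_quat_def)
    moreover have "V_to_r3 v = vector [r * c, r * s * a, r * s * b]" by (simp add: V_to_r3_def hv)
    ultimately show "rot_axis (V_to_r3 (- (u * qK))) (2 * \<theta>) p = rot_plane (V_to_r3 1) (V_to_r3 v) (2 * \<theta>) p"
      using main4[OF n2 sp, where r=r and c=c and \<phi>="2 * \<theta>" and p=p] rne rpos ax d0 by simp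
  qed
  show ?thesis using P1 P2 P3 P4 P5 by blast
qed

end
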